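(* Let $\beta\in\mathcal{A}$. If $\nu^\star\in N_\beta$ is an $X$-circuit of $\mathcal{A}$, then the set $(\nu^\star)^+=\{\alpha\in\mathcal{A}:\nu^\star_\alpha>0\}=\operatorname{supp}\nu^\star\setminus\{\beta\}$ is affinely independent (as a subset of $\mathbb{R}^n$).
   Context: $X\subset\mathbb{R}^n$ is a nonempty closed convex set and $\mathcal{A}\subset\mathbb{R}^n$ is a nonempty finite set. $\mathbb{R}^{\mathcal{A}}$ denotes real vectors indexed by $\mathcal{A}$. $\mathcal{A}$ is viewed as the linear map $\mathbb{R}^{\mathcal{A}}\to\mathbb{R}^n$, $\mathcal{A}\nu=\sum_{\alpha\in\mathcal{A}}\alpha\nu_\alpha$. The support function of $X$ is $\sigma_X(y)=\sup\{y^Tx:x\in X\}\in\mathbb{R}\cup\{+\infty\}$. For $\beta\in\mathcal{A}$, $N_\beta=\{\nu\in\mathbb{R}^{\mathcal{A}}:\nu_\alpha\ge0\ \forall\alpha\neq\beta,\ \sum_{\alpha}\nu_\alpha=0\}$. A vector $\nu^\star\in N_\beta$ is an $X$-circuit of $\mathcal{A}$ if (1) $\nu^\star\neq0$, (2) $\sigma_X(-\mathcal{A}\nu^\star)<\infty$, and (3) $\nu^\star$ cannot be written as a convex combination of two non-proportional vectors $\nu^{(1)},\nu^{(2)}\in N_\beta$ such that the map $\nu\mapsto\sigma_X(-\mathcal{A}\nu)$ is affine on the segment $[\nu^{(1)},\nu^{(2)}]$. *)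

theory Defs
  imports "HOL-Analysis.Analysis"
begin

(* Vectors in R^A are represented as functions 'a => real vanishing outside A. *)

definition coeff_vecs :: "'a set \<Rightarrow> ('a \<Rightarrow> real) set" where
  "coeff_vecs A = {\<nu>. \<forall>\<alpha>. \<alpha> \<notin> A \<longrightarrow> \<nu> \<alpha> = 0}"

definition lin_map :: "'a::euclidean_space set \<Rightarrow> ('a \<Rightarrow> real) \<Rightarrow> 'a" where
  "lin_map A \<nu> = (\<Sum>\<alpha>\<in>A. \<nu> \<alpha> *\<^sub>R \<alpha>)"

definition support_fun :: "'a::euclidean_space set \<Rightarrow> 'a \<Rightarrow> ereal" where
  "support_fun X y = (SUP x\<in>X. ereal (y \<bullet> x))"

definition N_set :: "'a set \<Rightarrow> 'a \<Rightarrow> ('a \<Rightarrow> real) set" where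
  "N_set A \<beta> = {\<nu> \<in> coeff_vecs A. (\<forall>\<alpha>\<in>A. \<alpha> \<noteq> \<beta> \<longrightarrow> \<nu> \<alpha> \<ge> 0) \<and> (\<Sum>\<alpha>\<in>A. \<nu> \<alpha>) = 0}"

definition proportional :: "('a \<Rightarrow> real) \<Rightarrow> ('a \<Rightarrow> real) \<Rightarrow> bool" where
  "proportional \<nu>1 \<nu>2 \<longleftrightarrow> (\<exists>c. \<nu>1 = (\<lambda>\<alpha>. c * \<nu>2 \<alpha>)) \<or> (\<exists>c. \<nu>2 = (\<lambda>\<alpha>. c * \<nu>1 \<alpha>))"

definition affine_on_segment ::
  "'a::euclidean_space set \<Rightarrow> 'a set \<Rightarrow> ('a \<Rightarrow> real) \<Rightarrow> ('a \<Rightarrow> real) \<Rightarrow> bool" where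
  "affine_on_segment X A \<nu>1 \<nu>2 \<longleftrightarrow>
     (\<exists>a b::real. \<forall>t\<in>{0..1}.
        support_fun X (- lin_map A (\<lambda>\<alpha>. (1 - t) * \<nu>1 \<alpha> + t * \<nu>2 \<alpha>)) = ereal (a + b * t))"

definition X_circuit :: "'a::euclidean_space set \<Rightarrow> 'a set \<Rightarrow> 'a \<Rightarrow> ('a \<Rightarrow> real) \<Rightarrow> bool" where
  "X_circuit X A \<beta> \<nu> \<longleftrightarrow>
     \<nu> \<in> N_set A \<beta> \<and> \<nu> \<noteq> (\<lambda>_. 0) \<and>
     support_fun X (- lin_map A \<nu>) < \<infinity> \<and>
     \<not> (\<exists>\<nu>1 \<nu>2 \<theta>. \<nu>1 \<in> N_set A \<beta> \<and> \<nu>2 \<in> N_set A \<beta> \<and> \<not> proportional \<nu>1 \<nu>2 \<and>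
          0 < \<theta> \<and> \<theta> < 1 \<and> \<nu> = (\<lambda>\<alpha>. \<theta> * \<nu>1 \<alpha> + (1 - \<theta>) * \<nu>2 \<alpha>) \<and>
          affine_on_segment X A \<nu>1 \<nu>2)"

end

theory Submission
  imports Defs
begin

theorem proposition3p4:
  fixes X :: "'a::euclidean_space set" and A :: "'a set"
    and \<beta> :: 'a and \<nu> :: "'a \<Rightarrow> real"
  assumes "X \<noteq> {}" and "closed X" and "convex X"
    and "finite A" and "A \<noteq> {}"
    and "\<beta> \<in> A"
    and "X_circuit X A \<beta> \<nu>"
  shows "\<not> affine_dependent {\<alpha> \<in> A. \<nu> \<alpha> > 0}"
proof
  define P where "P = {\<alpha> \<in> A. \<nu> \<alpha> > 0}"
  assume dep: "affine_dependent {\<alpha> \<in> A. \<nu> \<alpha> > 0}"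
  have finP: "finite P" using assms(4) unfolding P_def by simp
  have PA: "P \<subseteq> A" unfolding P_def by auto
  from dep obtain u where u1: "sum u P = 0" and u2: "\<exists>v\<in>P. u v \<noteq> 0"
      and u3: "(\<Sum>v\<in>P. u v *\<^sub>R v) = 0"
    using affine_dependent_explicit_finite[OF finP] unfolding P_def by auto
  have circ: "\<nu> \<in> N_set A \<beta>" "\<nu> \<noteq> (\<lambda>_. 0)" "support_fun X (- lin_map A \<nu>) < \<infinity>"
    and nodec: "\<not> (\<exists>\<nu>1 \<nu>2 \<theta>. \<nu>1 \<in> N_set A \<beta> \<and> \<nu>2 \<in> N_set A \<beta> \<and> \<not> proportional \<nu>1 \<nu>2 \<and>
          0 < \<theta> \<and> \<theta> < 1 \<and> \<nu> = (\<lambda>\<alpha>. \<theta> * \<nu>1 \<alpha> + (1 - \<theta>) * \<nu>2 \<alpha>) \<and>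
          affine_on_segment X A \<nu>1 \<nu>2)"
    using assms(7) unfolding X_circuit_def by auto
  have out: "\<And>\<alpha>. \<alpha> \<notin> A \<Longrightarrow> \<nu> \<alpha> = 0" and nn: "\<And>\<alpha>. \<alpha> \<in> A \<Longrightarrow> \<alpha> \<noteq> \<beta> \<Longrightarrow> \<nu> \<alpha> \<ge> 0"
    and s0: "(\<Sum>\<alpha>\<in>A. \<nu> \<alpha>) = 0"
    using circ(1) unfolding N_set_def coeff_vecs_def by auto
  have nb: "\<nu> \<beta> < 0"
  proof (rule ccontr)
    assume "\<not> \<nu> \<beta> < 0"
    then have ge: "\<forall>\<alpha>\<in>A. \<nu> \<alpha> \<ge> 0" using nn by force
    then have "\<forall>\<alpha>\<in>A. \<nu> \<alpha> = 0" using sum_nonneg_eq_0_iff[OF assms(4)] s0 by blast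
    then have "\<nu> = (\<lambda>_. 0)" using out by (metis)
    then show False using circ(2) by simp
  qed
  have bP: "\<beta> \<notin> P" using nb unfolding P_def by auto
  have Pne: "P \<noteq> {}" using u2 by auto
  define E where "E = (\<lambda>\<alpha>. \<nu> \<alpha> / (\<bar>u \<alpha>\<bar> + 1)) ` P"
  define \<epsilon> where "\<epsilon> = Min E"
  have finE: "finite E" "E \<noteq> {}" using finP Pne unfolding E_def by auto
  have epos: "\<epsilon> > 0" unfolding \<epsilon>_def using finE
    by (subst Min_gr_iff) (auto simp: E_def P_def)
  have ele: "\<And>\<alpha>. \<alpha> \<in> P \<Longrightarrow> \<epsilon> * \<bar>u \<alpha>\<bar> \<le> \<nu> \<alpha>"
  proof -
    fix \<alpha> assume aP: "\<alpha> \<in> P"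
    have pa: "\<nu> \<alpha> > 0" using aP unfolding P_def by auto
    have "\<epsilon> \<le> \<nu> \<alpha> / (\<bar>u \<alpha>\<bar> + 1)" unfolding \<epsilon>_def using finE aP
      by (intro Min_le) (auto simp: E_def)
    then have "\<epsilon> * (\<bar>u \<alpha>\<bar> + 1) \<le> \<nu> \<alpha>" by (simp add: pos_le_divide_eq add_pos_nonneg)
    then show "\<epsilon> * \<bar>u \<alpha>\<bar> \<le> \<nu> \<alpha>" using epos by (simp add: algebra_simps)
  qed
  define \<mu> where "\<mu> = (\<lambda>\<alpha>. if \<alpha> \<in> P then \<epsilon> * u \<alpha> else 0)"
  have \<mu>b: "\<mu> \<beta> = 0" using bP unfolding \<mu>_def by simp
  have \<mu>ne: "\<mu> \<noteq> (\<lambda>_. 0)"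
  proof
    assume "\<mu> = (\<lambda>_. 0)"
    then show False using u2 epos unfolding \<mu>_def by (metis mult_eq_0_iff less_irrefl)
  qed
  have sum\<mu>: "(\<Sum>\<alpha>\<in>A. \<mu> \<alpha>) = 0"
  proof -
    have "(\<Sum>\<alpha>\<in>A. \<mu> \<alpha>) = (\<Sum>\<alpha>\<in>P. \<mu> \<alpha>)"
      using PA assms(4) by (intro sum.mono_neutral_right) (auto simp: \<mu>_def)
    also have "\<dots> = \<epsilon> * sum u P" by (simp add: \<mu>_def sum_distrib_left)
    finally show ?thesis using u1 by simp
  qed
  have lin\<mu>: "lin_map A \<mu> = 0"
  proof -
    have "lin_map A \<mu> = (\<Sum>\<alpha>\<in>P. \<mu> \<alpha> *\<^sub>R \<alpha>)"
      unfolding lin_map_def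
      using PA assms(4) by (intro sum.mono_neutral_right) (auto simp: \<mu>_def)
    also have "\<dots> = \<epsilon> *\<^sub>R (\<Sum>v\<in>P. u v *\<^sub>R v)"
      by (simp add: \<mu>_def scaleR_sum_right)
    finally show ?thesis using u3 by simp
  qed
  define \<nu>1 where "\<nu>1 = (\<lambda>\<alpha>. \<nu> \<alpha> + \<mu> \<alpha>)"
  define \<nu>2 where "\<nu>2 = (\<lambda>\<alpha>. \<nu> \<alpha> - \<mu> \<alpha>)"
  have \<mu>out: "\<And>\<alpha>. \<alpha> \<notin> A \<Longrightarrow> \<mu> \<alpha> = 0" using PA unfolding \<mu>_def by auto
  have bnd: "\<And>\<alpha>. \<alpha> \<in> A \<Longrightarrow> \<alpha> \<noteq> \<beta> \<Longrightarrow> \<bar>\<mu> \<alpha>\<bar> \<le> \<nu> \<alpha>"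
  proof -
    fix \<alpha> assume "\<alpha> \<in> A" "\<alpha> \<noteq> \<beta>"
    show "\<bar>\<mu> \<alpha>\<bar> \<le> \<nu> \<alpha>"
    proof (cases "\<alpha> \<in> P")
      case True then show ?thesis using ele[OF True] epos by (simp add: \<mu>_def abs_mult)
    next
      case False then show ?thesis using nn \<open>\<alpha> \<in> A\<close> \<open>\<alpha> \<noteq> \<beta>\<close> by (simp add: \<mu>_def)
    qed
  qed
  have N1: "\<nu>1 \<in> N_set A \<beta>"
    unfolding N_set_def coeff_vecs_def \<nu>1_def
    using out \<mu>out bnd s0 sum\<mu> by (auto simp: sum.distrib abs_le_iff) (smt (verit) bnd abs_le_iff)
  have N2: "\<nu>2 \<in> N_set A \<beta>"
    unfolding N_set_def coeff_vecs_def \<nu>2_def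
    using out \<mu>out bnd s0 sum\<mu> by (auto simp: sum_subtractf abs_le_iff)
  have np: "\<not> proportional \<nu>1 \<nu>2"
  proof
    assume "proportional \<nu>1 \<nu>2"
    then obtain c where "\<nu>1 = (\<lambda>\<alpha>. c * \<nu>2 \<alpha>) \<or> \<nu>2 = (\<lambda>\<alpha>. c * \<nu>1 \<alpha>)"
      unfolding proportional_def by auto
    then show False
    proof
      assume h: "\<nu>1 = (\<lambda>\<alpha>. c * \<nu>2 \<alpha>)"
      then have "\<nu>1 \<beta> = c * \<nu>2 \<beta>" by metis
      then have "c = 1" using \<mu>b nb by (simp add: \<nu>1_def \<nu>2_def)
      then have "\<forall>\<alpha>. \<mu> \<alpha> = 0"
      proof (intro allI)
        fix \<alpha> have "\<nu>1 \<alpha> = \<nu>2 \<alpha>" using fun_cong[OF h, of \<alpha>] \<open>c = 1\<close> by simp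
        then show "\<mu> \<alpha> = 0" unfolding \<nu>1_def \<nu>2_def by simp
      qed
      then show False using \<mu>ne by auto
    next
      assume h: "\<nu>2 = (\<lambda>\<alpha>. c * \<nu>1 \<alpha>)"
      then have "\<nu>2 \<beta> = c * \<nu>1 \<beta>" by metis
      then have "c = 1" using \<mu>b nb by (simp add: \<nu>1_def \<nu>2_def)
      then have "\<forall>\<alpha>. \<mu> \<alpha> = 0"
      proof (intro allI)
        fix \<alpha> have "\<nu>1 \<alpha> = \<nu>2 \<alpha>" using fun_cong[OF h, of \<alpha>] \<open>c = 1\<close> by simp
        then show "\<mu> \<alpha> = 0" unfolding \<nu>1_def \<nu>2_def by simp
      qed
      then show False using \<mu>ne by auto
    qed
  qed
  have dec: "\<nu> = (\<lambda>\<alpha>. (1/2) * \<nu>1 \<alpha> + (1 - 1/2) * \<nu>2 \<alpha>)"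
    by (rule ext) (simp add: \<nu>1_def \<nu>2_def field_simps)
  obtain s where sv: "support_fun X (- lin_map A \<nu>) = ereal s"
  proof -
    obtain x where "x \<in> X" using assms(1) by auto
    then have "ereal ((- lin_map A \<nu>) \<bullet> x) \<le> support_fun X (- lin_map A \<nu>)"
      unfolding support_fun_def by (rule SUP_upper)
    then have "support_fun X (- lin_map A \<nu>) \<noteq> -\<infinity>" by auto
    with circ(3) show ?thesis using that by (cases "support_fun X (- lin_map A \<nu>)") auto
  qed
  have lin_seg: "lin_map A (\<lambda>\<alpha>. (1 - t) * \<nu>1 \<alpha> + t * \<nu>2 \<alpha>) = lin_map A \<nu>" for t
  proof -
    have "(\<lambda>\<alpha>. (1 - t) * \<nu>1 \<alpha> + t * \<nu>2 \<alpha>) = (\<lambda>\<alpha>. \<nu> \<alpha> + (1 - 2*t) * \<mu> \<alpha>)"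
      by (auto simp: \<nu>1_def \<nu>2_def algebra_simps)
    moreover have "lin_map A (\<lambda>\<alpha>. \<nu> \<alpha> + (1 - 2*t) * \<mu> \<alpha>) = lin_map A \<nu> + (1 - 2*t) *\<^sub>R lin_map A \<mu>"
      unfolding lin_map_def by (simp add: scaleR_add_left sum.distrib scaleR_sum_right)
    ultimately show ?thesis using lin\<mu> by simp
  qed
  have "affine_on_segment X A \<nu>1 \<nu>2"
    unfolding affine_on_segment_def
    by (rule exI[of _ s], rule exI[of _ 0]) (simp add: lin_seg sv)
  then have "\<exists>\<nu>1 \<nu>2 \<theta>. \<nu>1 \<in> N_set A \<beta> \<and> \<nu>2 \<in> N_set A \<beta> \<and> \<not> proportional \<nu>1 \<nu>2 \<and>
          0 < \<theta> \<and> \<theta> < 1 \<and> \<nu> = (\<lambda>\<alpha>. \<theta> * \<nu>1 \<alpha> + (1 - \<theta>) * \<nu>2 \<alpha>) \<and>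
          affine_on_segment X A \<nu>1 \<nu>2"
    using N1 N2 np dec by (intro exI[of _ \<nu>1] exI[of _ \<nu>2] exI[of _ "1/2"]) simp
  then show False using nodec by blast
qed

end
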